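(* Let $\{a_n : n\in\mathbb{R}\cap[1,\infty)\}$ be positive real numbers such that (1) there is $c>0$ such that $\dfrac{a_{m^2n}}{a_{mn}}=\dfrac{a_{mn}}{a_n}\bigl(1+O(n^{-c})\bigr)$ for all $m\in(1.1,10)$, where the constant implicit in $O(n^{-c})$ does not depend on $m$ in this range; and (2) $\lim_{\epsilon\to0}\liminf_{n\to\infty}\inf_{n\le s\le t\le(1+\epsilon)n}\dfrac{a_t}{a_s}\ge 1$. Then there exist $0<C<\infty$, $\alpha\in\mathbb{R}$ and $c'>0$ such that $a_n=Cn^{\alpha}\bigl(1+O(n^{-c'})\bigr)$ as $n\to\infty$.
   Context: $O(n^{-c})$ denotes a quantity bounded in absolute value by a constant times $n^{-c}$ for all $n$. *)

theory Defs
  imports "HOL-Analysis.Analysis"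
begin

end

theory Submission
  imports Defs "HOL-Analysis.Kronecker_Approximation_Theorem"
begin


lemma geom_conv:
  fixes u :: "nat \<Rightarrow> real"
  assumes q: "0 \<le> q" "q < 1" and A: "\<And>k. \<bar>u (Suc k) - u k\<bar> \<le> A * q^k"
  shows "\<exists>l. u \<longlonglongrightarrow> l \<and> \<bar>u 0 - l\<bar> \<le> A/(1-q)"
proof -
  define d where "d k = u (Suc k) - u k" for k
  have s: "summable (\<lambda>k. A*q^k)" using q by (intro summable_mult summable_geometric) auto
  have sd: "summable d"
    by (rule summable_comparison_test'[of "\<lambda>k. A*q^k" 0]) (use s A d_def in auto)
  have "(\<lambda>n. \<Sum>k<n. d k) \<longlonglongrightarrow> suminf d" using sd by (rule summable_LIMSEQ)
  moreover have "(\<Sum>k<n. d k) = u n - u 0" for n unfolding d_def by (rule sum_lessThan_telescope)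
  ultimately have "(\<lambda>n. u n - u 0) \<longlonglongrightarrow> suminf d" by simp
  then have "(\<lambda>n. (u n - u 0) + u 0) \<longlonglongrightarrow> suminf d + u 0" by (intro tendsto_intros)
  then have conv: "u \<longlonglongrightarrow> suminf d + u 0" by simp
  have sA: "suminf (\<lambda>k. A*q^k) = A/(1-q)" using q by (simp add: suminf_mult suminf_geometric divide_inverse)
  have "suminf d \<le> suminf (\<lambda>k. A*q^k)"
    by (rule suminf_le) (use A d_def sd s in \<open>auto simp: abs_le_iff\<close>)
  moreover have "suminf (\<lambda>k. - (A*q^k)) \<le> suminf d"
  proof (rule suminf_le)
    show "- (A*q^k) \<le> d k" for k using A[of k] unfolding d_def by linarith
  qed (use sd summable_minus[OF s] in auto)
  moreover have "suminf (\<lambda>k. - (A*q^k)) = - suminf (\<lambda>k. A*q^k)" using s by (rule suminf_minus)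
  ultimately have "\<bar>suminf d\<bar> \<le> A/(1-q)" using sA by auto
  then show ?thesis using conv by (intro exI[of _ "suminf d + u 0"]) auto
qed

lemma P_const:
  fixes P :: "real \<Rightarrow> real"
  assumes mu: "\<mu> > 0" and per: "\<And>x. x \<ge> X0 \<Longrightarrow> P (x+\<mu>) = P x"
   and mono: "\<And>\<eta>. \<eta> > 0 \<Longrightarrow> \<exists>\<delta>>0. \<forall>s t. X0 \<le> s \<longrightarrow> s \<le> t \<longrightarrow> t \<le> s+\<delta> \<longrightarrow> P s - \<eta> \<le> P t"
   and dense: "\<And>\<delta>. \<delta> > 0 \<Longrightarrow> \<exists>\<tau> z. 0<\<tau> \<and> \<tau><\<delta> \<and> z \<noteq> (0::int) \<and> (\<forall>x\<ge>X0. P (x+\<tau>) = P x + of_int z * \<beta>)"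
  shows "\<beta> = 0 \<and> (\<forall>x\<ge>X0. P x = P X0)"
proof -
  have iter: "P (x + real k * \<tau>) = P x + real k * \<gamma>" if "x \<ge> X0" "\<tau> > 0" "\<forall>x\<ge>X0. P (x+\<tau>) = P x + \<gamma>" for x k \<tau> \<gamma>
  proof (induction k)
    case (Suc k)
    have "P (x + real (Suc k) * \<tau>) = P ((x + real k * \<tau>) + \<tau>)" by (simp add: algebra_simps)
    also have "\<dots> = P (x + real k * \<tau>) + \<gamma>"
    proof -
      have "x + real k * \<tau> \<ge> X0" using that by (simp add: add_increasing2)
      then show ?thesis using that by auto
    qed
    finally show ?case using Suc by (simp add: algebra_simps)
  qed simp
  have beta: "\<beta> = 0"
  proof (rule ccontr)
    assume "\<beta> \<noteq> 0"
    define \<eta> where "\<eta> = \<bar>\<beta>\<bar>/2"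
    have "\<eta> > 0" using \<open>\<beta> \<noteq> 0\<close> by (simp add: \<eta>_def)
    then obtain \<delta> where d: "\<delta> > 0" "\<forall>s t. X0 \<le> s \<longrightarrow> s \<le> t \<longrightarrow> t \<le> s+\<delta> \<longrightarrow> P s - \<eta> \<le> P t"
      using mono by blast
    obtain \<tau> z where t: "0<\<tau>" "\<tau> < min \<delta> \<mu>" "z \<noteq> 0" "\<forall>x\<ge>X0. P (x+\<tau>) = P x + of_int z * \<beta>"
      using dense[of "min \<delta> \<mu>"] d mu by auto
    define \<gamma> where "\<gamma> = of_int z * \<beta>"
    have "1 \<le> \<bar>z\<bar>" using t(3) by linarith
    then have z1: "1 \<le> \<bar>real_of_int z\<bar>" by (metis of_int_1_le_iff of_int_abs)
    have "\<bar>\<gamma>\<bar> = \<bar>real_of_int z\<bar> * \<bar>\<beta>\<bar>" by (simp add: \<gamma>_def abs_mult)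
    also have "\<dots> \<ge> 1 * \<bar>\<beta>\<bar>" using z1 by (intro mult_right_mono) auto
    finally have "\<bar>\<gamma>\<bar> \<ge> \<bar>\<beta>\<bar>" by simp
    have g1: "P X0 - \<eta> \<le> P (X0 + \<tau>)" by (rule d(2)[rule_format]) (use t(1,2) in auto)
    have g1': "\<gamma> \<ge> -\<eta>" using g1 t(4)[rule_format, of X0] by (simp add: \<gamma>_def)
    define j where "j = nat \<lfloor>\<mu>/\<tau>\<rfloor>"
    have "0 \<le> \<mu>/\<tau>" using t(1) mu by simp
    then have fl: "real j = real_of_int \<lfloor>\<mu>/\<tau>\<rfloor>" unfolding j_def by (intro of_nat_nat) simp
    have "real j \<le> \<mu>/\<tau>" using fl of_int_floor_le[of "\<mu>/\<tau>"] by linarith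
    then have jt1: "real j * \<tau> \<le> \<mu>" using t(1) by (simp add: field_simps)
    have "1 \<le> \<mu>/\<tau>" using t(1,2) by simp
    then have "1 \<le> \<lfloor>\<mu>/\<tau>\<rfloor>" by (simp add: le_floor_iff)
    then have j1: "1 \<le> real j" using fl by simp
    have "\<mu>/\<tau> < real j + 1" using fl real_of_int_floor_add_one_gt[of "\<mu>/\<tau>"] by linarith
    then have jt2: "\<mu> < real j * \<tau> + \<tau>" using t(1) by (simp add: field_simps)
    have "P (X0 + real j * \<tau>) - \<eta> \<le> P (X0 + \<mu>)"
      proof (rule d(2)[rule_format])
        have "0 \<le> real j * \<tau>" using t(1) by simp
        then show "X0 \<le> X0 + real j * \<tau>" by linarith
      qed (use jt1 jt2 t(1,2) in auto)
    moreover have "P (X0 + real j * \<tau>) = P X0 + real j * \<gamma>" by (rule iter) (use t(1,4) in \<open>auto simp: \<gamma>_def\<close>)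
    moreover have "P (X0 + \<mu>) = P X0" using per by auto
    ultimately have "real j * \<gamma> \<le> \<eta>" by auto
    have "\<gamma> \<le> \<eta>"
    proof (cases "\<gamma> \<le> 0")
      case True then show ?thesis using \<open>\<eta> > 0\<close> by linarith
    next
      case False
      have "1*\<gamma> \<le> real j * \<gamma>" using j1 False by (intro mult_right_mono) auto
      then show ?thesis using \<open>real j * \<gamma> \<le> \<eta>\<close> by linarith
    qed
    then have "\<bar>\<gamma>\<bar> \<le> \<eta>" using g1' by auto
    then show False using \<open>\<bar>\<gamma>\<bar> \<ge> \<bar>\<beta>\<bar>\<close> \<open>\<eta> > 0\<close> by (simp add: \<eta>_def)
  qed
  have le: "P s \<le> P t" if "X0 \<le> s" "s \<le> t" for s t
  proof -
    have H: "P s - \<eta> \<le> P t" if "\<eta> > 0" for \<eta>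
    proof -
      obtain \<delta> where d: "\<delta> > 0" "\<forall>s t. X0 \<le> s \<longrightarrow> s \<le> t \<longrightarrow> t \<le> s+\<delta> \<longrightarrow> P s - \<eta> \<le> P t"
        using mono \<open>\<eta>>0\<close> by blast
      obtain \<tau> z where t: "0<\<tau>" "\<tau> < \<delta>" "\<forall>x\<ge>X0. P (x+\<tau>) = P x + of_int z * \<beta>"
        using dense[of \<delta>] d(1) by blast
      define j where "j = nat \<lfloor>(t-s)/\<tau>\<rfloor>"
      have "0 \<le> (t-s)/\<tau>" using t(1) \<open>s \<le> t\<close> by simp
      then have fl: "real j = real_of_int \<lfloor>(t-s)/\<tau>\<rfloor>" unfolding j_def by (intro of_nat_nat) simp
      have "real j \<le> (t-s)/\<tau>" using fl of_int_floor_le[of "(t-s)/\<tau>"] by linarith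
      then have jt1: "real j * \<tau> \<le> t - s" using t(1) by (simp add: field_simps)
      have "(t-s)/\<tau> < real j + 1" using fl real_of_int_floor_add_one_gt[of "(t-s)/\<tau>"] by linarith
      then have jt2: "t - s < real j * \<tau> + \<tau>" using t(1) by (simp add: field_simps)
      have "P (s + real j * \<tau>) = P s + real j * 0" by (rule iter) (use t beta \<open>X0 \<le> s\<close> in auto)
      moreover have "P (s + real j * \<tau>) - \<eta> \<le> P t"
      proof (rule d(2)[rule_format])
        have "0 \<le> real j * \<tau>" using t(1) by simp
        then show "X0 \<le> s + real j * \<tau>" using \<open>X0 \<le> s\<close> by linarith
      qed (use jt1 jt2 t(1,2) in auto)
      ultimately show ?thesis by simp
    qed
    show ?thesis by (rule field_le_epsilon) (use H in force)
  qed
  have "P x = P X0" if "x \<ge> X0" for x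
  proof -
    obtain N :: nat where N: "(x - X0)/\<mu> \<le> real N" using real_arch_simple by blast
    then have xN: "x \<le> X0 + real N * \<mu>" using mu by (simp add: field_simps)
    have "P (X0 + real N * \<mu>) = P X0 + real N * 0" by (rule iter) (use mu per in auto)
    then have e: "P (X0 + real N * \<mu>) = P X0" by simp
    have "P X0 \<le> P x" by (rule le) (use that in auto)
    moreover have "P x \<le> P (X0 + real N * \<mu>)" by (rule le) (use that xN in auto)
    ultimately show ?thesis using e by linarith
  qed
  then show ?thesis using beta by blast
qed




lemma step1_lemma:
  fixes f :: "real \<Rightarrow> real"
  assumes mu: "\<mu> > 0" and c: "c > 0"
   and H: "\<And>x. x \<ge> X0 \<Longrightarrow> \<bar>f (x+2*\<mu>) - 2*f (x+\<mu>) + f x\<bar> \<le> K * exp (-c*x)"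
   and dl: "\<delta> > 0" and H2: "\<And>s t. X \<le> s \<Longrightarrow> s \<le> t \<Longrightarrow> t \<le> s+\<delta> \<Longrightarrow> f t - f s \<ge> -1"
  shows "\<exists>L M X'. \<forall>x\<ge>X'. \<bar>f (x+\<mu>) - f x - L\<bar> \<le> M * exp (-c*x)"
proof -
  define q where "q = exp (-c*\<mu>)"
  have q: "0 \<le> q" "q < 1" using mu c by (auto simp: q_def)
  define D where "D x = f (x+\<mu>) - f x" for x
  have expk: "exp (-c*(x + real k*\<mu>)) = exp (-c*x) * q^k" for x k
  proof -
    have "-c*(x + real k*\<mu>) = -c*x + real k * (-c*\<mu>)" by (simp add: algebra_simps)
    then show ?thesis by (simp only: exp_add exp_of_nat_mult q_def)
  qed
  have nn: "0 \<le> real k * \<mu>" for k using mu by simp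
  have stepD: "\<bar>D (x + real (Suc k)*\<mu>) - D (x + real k*\<mu>)\<bar> \<le> (K*exp (-c*x)) * q^k" if "x \<ge> X0" for x k
  proof -
    have "x + real k*\<mu> \<ge> X0" using that nn[of k] by linarith
    from H[OF this] have "\<bar>f (x+real k*\<mu>+2*\<mu>) - 2*f (x+real k*\<mu>+\<mu>) + f (x+real k*\<mu>)\<bar> \<le> K*exp (-c*(x+real k*\<mu>))" .
    moreover have "D (x + real (Suc k)*\<mu>) - D (x + real k*\<mu>) = f (x+real k*\<mu>+2*\<mu>) - 2*f (x+real k*\<mu>+\<mu>) + f (x+real k*\<mu>)"
    proof -
      have a1: "x + real (Suc k)*\<mu> + \<mu> = x+real k*\<mu>+2*\<mu>" by (simp add: algebra_simps)
      have a2: "x + real (Suc k)*\<mu> = x+real k*\<mu>+\<mu>" by (simp add: algebra_simps)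
      show ?thesis unfolding D_def a1 a2 by (simp add: algebra_simps)
    qed
    ultimately show ?thesis using expk[of x k] by (simp add: mult.assoc)
  qed
  define M where "M = K/(1-q)"
  define lm where "lm x = lim (\<lambda>k. D (x + real k*\<mu>))" for x
  have conv: "(\<lambda>k. D (x + real k*\<mu>)) \<longlonglongrightarrow> lm x \<and> \<bar>D x - lm x\<bar> \<le> M*exp (-c*x)" if xx: "x\<ge>X0" for x
  proof -
    obtain l where l: "(\<lambda>k. D (x + real k*\<mu>)) \<longlonglongrightarrow> l" "\<bar>D (x + real 0*\<mu>) - l\<bar> \<le> K*exp (-c*x)/(1-q)"
      using geom_conv[of q "\<lambda>k. D (x + real k*\<mu>)" "K*exp (-c*x)"] q stepD[OF xx] by blast
    have "lm x = l" unfolding lm_def using l(1) by (rule limI)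
    then show ?thesis using l by (simp add: M_def)
  qed
  have per: "lm (x+\<mu>) = lm x" if "x \<ge> X0" for x
  proof -
    have "(\<lambda>k. D (x + real (Suc k)*\<mu>)) \<longlonglongrightarrow> lm x" using LIMSEQ_Suc[OF conv[OF that, THEN conjunct1]] by simp
    moreover have "(\<lambda>k. D (x + real (Suc k)*\<mu>)) = (\<lambda>k. D ((x+\<mu>) + real k*\<mu>))" by (simp add: algebra_simps)
    moreover have "x + \<mu> \<ge> X0" using that mu by linarith
    ultimately show ?thesis using conv[of "x+\<mu>"] LIMSEQ_unique by metis
  qed
  have perk: "lm (x + real k*\<mu>) = lm x" if "x \<ge> X0" for x k
  proof (induction k)
    case (Suc k)
    have "x + real k*\<mu> \<ge> X0" using that nn[of k] by linarith
    then have "lm (x + real k*\<mu> + \<mu>) = lm (x + real k*\<mu>)" by (rule per)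
    moreover have "x + real (Suc k)*\<mu> = x + real k*\<mu> + \<mu>" by (simp add: algebra_simps)
    ultimately show ?case using Suc by (simp add: add.assoc)
  qed simp
  have sumb: "\<bar>f (y + real k*\<mu>) - f y - real k * lm y\<bar> \<le> \<bar>M\<bar>*exp (-c*y)*(\<Sum>j<k. q^j)" if "y \<ge> X0" for y k
  proof (induction k)
    case 0 show ?case by simp
  next
    case (Suc k)
    have yk: "y + real k*\<mu> \<ge> X0" using that nn[of k] by linarith
    have a2: "y + real (Suc k)*\<mu> = y+real k*\<mu>+\<mu>" by (simp add: algebra_simps)
    have e1: "f (y + real (Suc k)*\<mu>) - f y - real (Suc k)*lm y = (f (y + real k*\<mu>) - f y - real k*lm y) + (D (y+real k*\<mu>) - lm (y + real k*\<mu>))"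
      unfolding a2 D_def perk[OF that, of k] by (simp add: algebra_simps)
    have "\<bar>D (y+real k*\<mu>) - lm (y+real k*\<mu>)\<bar> \<le> M*exp (-c*(y+real k*\<mu>))" using conv[OF yk] by blast
    also have "\<dots> \<le> \<bar>M\<bar> * exp (-c*(y+real k*\<mu>))" by (intro mult_right_mono) auto
    also have "\<dots> = \<bar>M\<bar> * exp (-c*y)*q^k" using expk[of y k] by simp
    finally have b: "\<bar>D (y+real k*\<mu>) - lm (y+real k*\<mu>)\<bar> \<le> \<bar>M\<bar> * exp (-c*y)*q^k" .
    have "\<bar>f (y + real (Suc k)*\<mu>) - f y - real (Suc k)*lm y\<bar> \<le> \<bar>f (y + real k*\<mu>) - f y - real k*lm y\<bar> + \<bar>D (y+real k*\<mu>) - lm (y + real k*\<mu>)\<bar>"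
      unfolding e1 by (rule abs_triangle_ineq)
    also have "\<dots> \<le> \<bar>M\<bar>*exp (-c*y)*(\<Sum>j<k. q^j) + \<bar>M\<bar> * exp (-c*y)*q^k" using Suc b by linarith
    also have "\<dots> = \<bar>M\<bar>*exp (-c*y)*(\<Sum>j<Suc k. q^j)" by (simp add: algebra_simps)
    finally show ?case .
  qed
  have gs: "(\<Sum>j<k. q^j) \<le> 1/(1-q)" for k
  proof -
    have "(\<Sum>j<k. q^j) = (1 - q^k)/(1-q)" using q by (simp add: sum_gp_strict)
    also have "\<dots> \<le> 1/(1-q)" using q by (intro divide_right_mono) auto
    finally show ?thesis .
  qed
  define E where "E y = \<bar>M\<bar>*exp (-c*y)/(1-q)" for y
  have fk: "\<bar>f (y + real k*\<mu>) - f y - real k*lm y\<bar> \<le> E y" if "y\<ge>X0" for y k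
  proof -
    have "\<bar>M\<bar>*exp (-c*y)*(\<Sum>j<k. q^j) \<le> \<bar>M\<bar>*exp (-c*y)*(1/(1-q))" by (intro mult_left_mono gs) auto
    then show ?thesis using sumb[OF that, of k] by (simp add: E_def)
  qed
  define X1 where "X1 = max X0 X"
  have mono1: "lm y1 \<le> lm y2" if "X1 \<le> y1" "y1 \<le> y2" "y2 \<le> y1 + \<delta>" for y1 y2
  proof (rule ccontr)
    assume nt: "\<not> lm y1 \<le> lm y2"
    define d where "d = lm y1 - lm y2"
    have "d > 0" using nt by (simp add: d_def)
    obtain k::nat where k: "f y2 - f y1 + E y1 + E y2 + 1 < real k * d" using reals_Archimedean3[OF \<open>d>0\<close>] by blast
    have "-1 \<le> f (y2 + real k*\<mu>) - f (y1 + real k*\<mu>)"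
    proof (rule H2)
      show "X \<le> y1 + real k*\<mu>" using that nn[of k] unfolding X1_def by linarith
    qed (use that in auto)
    moreover have "X0 \<le> y1" "X0 \<le> y2" using that unfolding X1_def by linarith+
    then have "\<bar>f (y1 + real k*\<mu>) - f y1 - real k*lm y1\<bar> \<le> E y1" "\<bar>f (y2 + real k*\<mu>) - f y2 - real k*lm y2\<bar> \<le> E y2"
      using fk by auto
    moreover have "real k * d = real k * lm y1 - real k * lm y2" by (simp add: d_def algebra_simps)
    ultimately show False using k by (simp add: abs_le_iff)
  qed
  have mono2: "\<forall>y1 y2. X1 \<le> y1 \<longrightarrow> y1 \<le> y2 \<longrightarrow> y2 \<le> y1 + real n*\<delta> \<longrightarrow> lm y1 \<le> lm y2" for n
  proof (induction n)
    case 0 show ?case by simp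
  next
    case (Suc n)
    show ?case
    proof (intro allI impI)
      fix y1 y2 assume a: "X1 \<le> y1" "y1 \<le> y2" "y2 \<le> y1 + real (Suc n)*\<delta>"
      show "lm y1 \<le> lm y2"
      proof (cases "y2 \<le> y1 + \<delta>")
        case True then show ?thesis using mono1 a by blast
      next
        case False
        have "lm y1 \<le> lm (y1+\<delta>)" by (rule mono1) (use a dl in auto)
        moreover have "lm (y1+\<delta>) \<le> lm y2"
          using Suc[rule_format, of "y1+\<delta>" y2] a dl False by (auto simp: algebra_simps)
        ultimately show ?thesis by linarith
      qed
    qed
  qed
  have mono: "lm y1 \<le> lm y2" if "X1 \<le> y1" "y1 \<le> y2" for y1 y2
  proof -
    obtain n :: nat where "(y2-y1)/\<delta> \<le> real n" using real_arch_simple by blast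
    then have "y2 \<le> y1 + real n*\<delta>" using dl by (simp add: field_simps)
    then show ?thesis using mono2[of n] that by blast
  qed
  have const: "lm y = lm X1" if "y \<ge> X1" for y
  proof -
    obtain N :: nat where "(y - X1)/\<mu> \<le> real N" using real_arch_simple by blast
    then have yN: "y \<le> X1 + real N*\<mu>" using mu by (simp add: field_simps)
    have "X0 \<le> X1" by (simp add: X1_def)
    then have e: "lm (X1 + real N*\<mu>) = lm X1" by (rule perk)
    have "lm X1 \<le> lm y" by (rule mono) (use that in auto)
    moreover have "lm y \<le> lm (X1 + real N*\<mu>)" by (rule mono) (use that yN in auto)
    ultimately show ?thesis using e by linarith
  qed
  have "\<forall>x\<ge>X1. \<bar>f (x+\<mu>) - f x - lm X1\<bar> \<le> M * exp (-c*x)"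
  proof (intro allI impI)
    fix x assume x: "X1 \<le> x"
    then have "X0 \<le> x" by (simp add: X1_def)
    then have "\<bar>D x - lm x\<bar> \<le> M*exp (-c*x)" using conv by blast
    then show "\<bar>f (x+\<mu>) - f x - lm X1\<bar> \<le> M * exp (-c*x)" using const[OF x] by (simp add: D_def)
  qed
  then show ?thesis by blast
qed




lemma step3_lemma:
  fixes f :: "real \<Rightarrow> real"
  assumes mu: "\<mu> > 0" "\<mu>' > 0" and c: "c > 0"
   and A1: "\<And>x. x \<ge> X0 \<Longrightarrow> \<bar>f (x+\<mu>) - f x - L\<bar> \<le> K * exp (-c*x)"
   and A2: "\<And>x. x \<ge> X0 \<Longrightarrow> \<bar>f (x+\<mu>') - f x - L'\<bar> \<le> K * exp (-c*x)"
   and H2: "\<And>\<eta>. \<eta> > 0 \<Longrightarrow> \<exists>\<delta>>0. \<exists>X. \<forall>s t. X \<le> s \<longrightarrow> s \<le> t \<longrightarrow> t \<le> s+\<delta> \<longrightarrow> f t - f s \<ge> -\<eta>"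
   and dense: "\<And>\<delta>. \<delta> > 0 \<Longrightarrow> \<exists>a b::nat. 0 < \<bar>real b*\<mu>' - real a*\<mu>\<bar> \<and> \<bar>real b*\<mu>' - real a*\<mu>\<bar> < \<delta>"
  shows "\<exists>\<alpha> B M X'. \<forall>x\<ge>X'. \<bar>f x - \<alpha>*x - B\<bar> \<le> M * exp (-c*x)"
proof -
  define \<alpha> where "\<alpha> = L/\<mu>"
  define g where "g x = f x - \<alpha>*x" for x
  define \<beta> where "\<beta> = L' - \<alpha>*\<mu>'"
  define q where "q = exp (-c*\<mu>)"
  have q: "0 \<le> q" "q < 1" using mu c by (auto simp: q_def)
  have expk: "exp (-c*(x + real k*\<mu>)) = exp (-c*x) * q^k" for x k
  proof -
    have "-c*(x + real k*\<mu>) = -c*x + real k * (-c*\<mu>)" by (simp add: algebra_simps)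
    then show ?thesis by (simp only: exp_add exp_of_nat_mult q_def)
  qed
  have nn: "0 \<le> real k * \<mu>" for k using mu by simp
  have am: "\<alpha> * \<mu> = L" using mu by (simp add: \<alpha>_def)
  have gstep: "\<bar>g (x+\<mu>) - g x\<bar> \<le> K*exp (-c*x)" if "x \<ge> X0" for x
  proof -
    have "g (x+\<mu>) - g x = f (x+\<mu>) - f x - L" using am by (simp add: g_def algebra_simps)
    then show ?thesis using A1[OF that] by simp
  qed
  have stepg: "\<bar>g (x + real (Suc k)*\<mu>) - g (x + real k*\<mu>)\<bar> \<le> (K*exp (-c*x)) * q^k" if "x \<ge> X0" for x k
  proof -
    have "x + real k*\<mu> \<ge> X0" using that nn[of k] by linarith
    from gstep[OF this] have "\<bar>g (x + real k*\<mu> + \<mu>) - g (x + real k*\<mu>)\<bar> \<le> K*exp (-c*(x+real k*\<mu>))" .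
    moreover have "x + real (Suc k)*\<mu> = x + real k*\<mu> + \<mu>" by (simp add: algebra_simps)
    ultimately show ?thesis using expk[of x k] by (simp add: mult.assoc add.assoc)
  qed
  define M where "M = K/(1-q)"
  define P where "P x = lim (\<lambda>k. g (x + real k*\<mu>))" for x
  have conv: "(\<lambda>k. g (x + real k*\<mu>)) \<longlonglongrightarrow> P x \<and> \<bar>g x - P x\<bar> \<le> M*exp (-c*x)" if xx: "x\<ge>X0" for x
  proof -
    obtain l where l: "(\<lambda>k. g (x + real k*\<mu>)) \<longlonglongrightarrow> l" "\<bar>g (x + real 0*\<mu>) - l\<bar> \<le> K*exp (-c*x)/(1-q)"
      using geom_conv[of q "\<lambda>k. g (x + real k*\<mu>)" "K*exp (-c*x)"] q stepg[OF xx] by blast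
    have "P x = l" unfolding P_def using l(1) by (rule limI)
    then show ?thesis using l by (simp add: M_def)
  qed
  have per: "P (x+\<mu>) = P x" if "x \<ge> X0" for x
  proof -
    have "(\<lambda>k. g (x + real (Suc k)*\<mu>)) \<longlonglongrightarrow> P x" using LIMSEQ_Suc[OF conv[OF that, THEN conjunct1]] by simp
    moreover have "(\<lambda>k. g (x + real (Suc k)*\<mu>)) = (\<lambda>k. g ((x+\<mu>) + real k*\<mu>))" by (simp add: algebra_simps)
    moreover have "x + \<mu> \<ge> X0" using that mu by linarith
    ultimately show ?thesis using conv[of "x+\<mu>"] LIMSEQ_unique by metis
  qed
  have perk: "P (x + real k*\<mu>) = P x" if "x \<ge> X0" for x k
  proof (induction k)
    case (Suc k)
    have "x + real k*\<mu> \<ge> X0" using that nn[of k] by linarith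
    then have "P (x + real k*\<mu> + \<mu>) = P (x + real k*\<mu>)" by (rule per)
    moreover have "x + real (Suc k)*\<mu> = x + real k*\<mu> + \<mu>" by (simp add: algebra_simps)
    ultimately show ?case using Suc by (simp add: add.assoc)
  qed simp
  have shift: "P (x+\<mu>') = P x + \<beta>" if "x \<ge> X0" for x
  proof -
    have x': "x + \<mu>' \<ge> X0" using that mu by linarith
    have "(\<lambda>k. g ((x+\<mu>') + real k*\<mu>) - g (x + real k*\<mu>)) \<longlonglongrightarrow> P (x+\<mu>') - P x"
      using conv[OF x', THEN conjunct1] conv[OF that, THEN conjunct1] by (rule tendsto_diff)
    moreover have "(\<lambda>k. g ((x+\<mu>') + real k*\<mu>) - g (x + real k*\<mu>)) \<longlonglongrightarrow> \<beta>"
    proof -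
      have b: "\<bar>g ((x+\<mu>') + real k*\<mu>) - g (x + real k*\<mu>) - \<beta>\<bar> \<le> K*exp (-c*x) * q^k" for k
      proof -
        have "x + real k*\<mu> \<ge> X0" using that nn[of k] by linarith
        from A2[OF this] have "\<bar>f (x + real k*\<mu> + \<mu>') - f (x + real k*\<mu>) - L'\<bar> \<le> K*exp (-c*(x+real k*\<mu>))" .
        moreover have "g ((x+\<mu>') + real k*\<mu>) - g (x + real k*\<mu>) - \<beta> = f (x + real k*\<mu> + \<mu>') - f (x + real k*\<mu>) - L'"
        proof -
          have e: "x + \<mu>' + real k * \<mu> = x + real k*\<mu> + \<mu>'" by simp
          show ?thesis unfolding g_def \<beta>_def e by (simp add: algebra_simps)
        qed
        ultimately show ?thesis using expk[of x k] by (simp add: mult.assoc)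
      qed
      have t0: "(\<lambda>k. K*exp (-c*x) * q^k) \<longlonglongrightarrow> 0"
      proof -
        have "(\<lambda>k. q^k) \<longlonglongrightarrow> 0" using q by (intro LIMSEQ_power_zero) simp
        from tendsto_mult[OF tendsto_const[of "K*exp (-c*x)"] this] show ?thesis by simp
      qed
      have ev: "eventually (\<lambda>k. norm (g ((x+\<mu>') + real k*\<mu>) - g (x + real k*\<mu>) - \<beta>) \<le> K*exp (-c*x) * q^k) sequentially"
        by (rule always_eventually) (unfold real_norm_def, use b in blast)
      have "(\<lambda>k. g ((x+\<mu>') + real k*\<mu>) - g (x + real k*\<mu>) - \<beta>) \<longlonglongrightarrow> 0"
        by (rule Lim_null_comparison[OF ev t0])
      then have "(\<lambda>k. (g ((x+\<mu>') + real k*\<mu>) - g (x + real k*\<mu>) - \<beta>) + \<beta>) \<longlonglongrightarrow> 0 + \<beta>"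
        by (intro tendsto_add tendsto_const)
      then show ?thesis by simp
    qed
    ultimately have "P (x+\<mu>') - P x = \<beta>" by (rule LIMSEQ_unique)
    then show ?thesis by simp
  qed
  have shiftk: "P (x + real k*\<mu>') = P x + real k * \<beta>" if "x \<ge> X0" for x k
  proof (induction k)
    case (Suc k)
    have "x + real k*\<mu>' \<ge> X0" using that mu(2) by (simp add: add_increasing2)
    then have "P (x + real k*\<mu>' + \<mu>') = P (x + real k*\<mu>') + \<beta>" by (rule shift)
    moreover have "x + real (Suc k)*\<mu>' = x + real k*\<mu>' + \<mu>'" by (simp add: algebra_simps)
    ultimately show ?case using Suc by (simp add: algebra_simps)
  qed simp
  have mono: "\<exists>\<delta>>0. \<forall>s t. X0 \<le> s \<longrightarrow> s \<le> t \<longrightarrow> t \<le> s+\<delta> \<longrightarrow> P s - \<eta> \<le> P t" if eta: "\<eta> > 0" for \<eta>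
  proof -
    obtain \<delta>0 X where d0: "\<delta>0 > 0" "\<forall>s t. X \<le> s \<longrightarrow> s \<le> t \<longrightarrow> t \<le> s+\<delta>0 \<longrightarrow> f t - f s \<ge> -(\<eta>/2)"
      using H2[of "\<eta>/2"] eta by auto
    define \<delta> where "\<delta> = min \<delta>0 (\<eta>/(2*(\<bar>\<alpha>\<bar>+1)))"
    have dpos: "\<delta> > 0" using d0 that by (simp add: \<delta>_def)
    have ad: "\<bar>\<alpha>\<bar> * \<delta> \<le> \<eta>/2"
    proof -
      have "\<bar>\<alpha>\<bar> * \<delta> \<le> (\<bar>\<alpha>\<bar>+1) * (\<eta>/(2*(\<bar>\<alpha>\<bar>+1)))"
        using dpos by (intro mult_mono) (auto simp: \<delta>_def)
      also have "\<dots> = \<eta>/2" by (simp add: field_simps)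
      finally show ?thesis .
    qed
    have "P s - \<eta> \<le> P t" if st: "X0 \<le> s" "s \<le> t" "t \<le> s+\<delta>" for s t
    proof -
      have lim: "(\<lambda>k. g (t + real k*\<mu>) - g (s + real k*\<mu>)) \<longlonglongrightarrow> P t - P s"
        using conv[of t, THEN conjunct1] conv[of s, THEN conjunct1] st by (intro tendsto_diff) auto
      obtain N :: nat where N: "(X - s)/\<mu> \<le> real N" using real_arch_simple by blast
      have "- \<eta> \<le> g (t + real k*\<mu>) - g (s + real k*\<mu>)" if k: "k \<ge> N" for k
      proof -
        have "X - s \<le> real N * \<mu>" using N mu by (simp add: field_simps)
        moreover have "real N * \<mu> \<le> real k * \<mu>" using k mu by (intro mult_right_mono) auto
        ultimately have "X \<le> s + real k*\<mu>" by linarith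
        moreover have "\<delta> \<le> \<delta>0" by (simp add: \<delta>_def)
        ultimately have "f (t + real k*\<mu>) - f (s + real k*\<mu>) \<ge> -(\<eta>/2)"
          using st by (intro d0(2)[rule_format]) linarith+
        moreover have "\<bar>\<alpha> * (t - s)\<bar> \<le> \<eta>/2"
        proof -
          have "\<bar>\<alpha> * (t - s)\<bar> = \<bar>\<alpha>\<bar> * (t-s)" using st by (simp add: abs_mult)
          also have "\<dots> \<le> \<bar>\<alpha>\<bar> * \<delta>" using st by (intro mult_left_mono) auto
          finally show ?thesis using ad by linarith
        qed
        moreover have "g (t + real k*\<mu>) - g (s + real k*\<mu>) = f (t + real k*\<mu>) - f (s + real k*\<mu>) - \<alpha> * (t - s)"
          by (simp add: g_def algebra_simps)
        ultimately show ?thesis by (simp add: abs_le_iff)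
      qed
      then have "- \<eta> \<le> P t - P s" by (intro LIMSEQ_le_const[OF lim] exI[of _ N]) blast
      then show ?thesis by simp
    qed
    then show ?thesis using dpos by blast
  qed
  have dense': "\<exists>\<tau> z. 0<\<tau> \<and> \<tau><\<delta> \<and> z \<noteq> (0::int) \<and> (\<forall>x\<ge>X0. P (x+\<tau>) = P x + of_int z * \<beta>)" if dd: "\<delta> > 0" for \<delta>
  proof -
    obtain a b :: nat where ab: "0 < \<bar>real b*\<mu>' - real a*\<mu>\<bar>" "\<bar>real b*\<mu>' - real a*\<mu>\<bar> < min \<delta> \<mu>"
      using dense[of "min \<delta> \<mu>"] dd mu by auto
    have b0: "b \<noteq> 0"
    proof
      assume "b = 0"
      then have "0 < real a * \<mu>" "real a * \<mu> < \<mu>" using ab by auto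
      then have "a \<noteq> 0" by (cases a) auto
      then have "1 \<le> real a" by simp
      then have "1 * \<mu> \<le> real a * \<mu>" using mu by (intro mult_right_mono) auto
      then show False using \<open>real a * \<mu> < \<mu>\<close> by linarith
    qed
    consider "real b*\<mu>' - real a*\<mu> > 0" | "real b*\<mu>' - real a*\<mu> < 0" using ab(1) by linarith
    then show ?thesis
    proof cases
      case 1
      define \<tau> where "\<tau> = real b*\<mu>' - real a*\<mu>"
      have "P (x+\<tau>) = P x + of_int (int b) * \<beta>" if x: "x \<ge> X0" for x
      proof -
        have "x + \<tau> \<ge> X0" using x 1 by (simp add: \<tau>_def)
        then have "P (x + \<tau> + real a * \<mu>) = P (x+\<tau>)" by (rule perk)
        moreover have "x + \<tau> + real a * \<mu> = x + real b * \<mu>'" by (simp add: \<tau>_def)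
        ultimately show ?thesis using shiftk[OF x, of b] by simp
      qed
      moreover have "0 < \<tau>" "\<tau> < \<delta>" using 1 ab by (auto simp: \<tau>_def)
      ultimately show ?thesis using b0 by (intro exI[of _ \<tau>] exI[of _ "int b"]) auto
    next
      case 2
      define \<tau> where "\<tau> = real a*\<mu> - real b*\<mu>'"
      have "P (x+\<tau>) = P x + of_int (- int b) * \<beta>" if x: "x \<ge> X0" for x
      proof -
        have x': "x + \<tau> \<ge> X0" using x 2 by (simp add: \<tau>_def)
        have eq: "x + \<tau> + real b * \<mu>' = x + real a * \<mu>" by (simp add: \<tau>_def)
        have "P (x+\<tau>) + real b*\<beta> = P (x + \<tau> + real b*\<mu>')" using shiftk[OF x', of b] by simp
        also have "\<dots> = P (x + real a*\<mu>)" by (simp only: eq)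
        also have "\<dots> = P x" by (rule perk[OF x])
        finally show ?thesis by simp
      qed
      moreover have "0 < \<tau>" "\<tau> < \<delta>" using 2 ab by (auto simp: \<tau>_def)
      ultimately show ?thesis using b0 by (intro exI[of _ \<tau>] exI[of _ "- int b"]) auto
    qed
  qed
  have "\<beta> = 0 \<and> (\<forall>x\<ge>X0. P x = P X0)"
    using P_const[OF mu(1) per mono dense'] by blast
  then have Pc: "\<And>x. x \<ge> X0 \<Longrightarrow> P x = P X0" by blast
  have "\<forall>x\<ge>X0. \<bar>f x - \<alpha>*x - P X0\<bar> \<le> M * exp (-c*x)"
  proof (intro allI impI)
    fix x assume x: "X0 \<le> x"
    then have "\<bar>g x - P x\<bar> \<le> M*exp (-c*x)" using conv by blast
    then show "\<bar>f x - \<alpha>*x - P X0\<bar> \<le> M * exp (-c*x)" using Pc[OF x] by (simp add: g_def)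
  qed
  then show ?thesis by blast
qed




lemma dir_ln23:
  assumes "\<delta> > 0"
  shows "\<exists>a b::nat. 0 < \<bar>real b * ln 3 - real a * ln 2\<bar> \<and> \<bar>real b * ln 3 - real a * ln 2\<bar> < \<delta>"
proof -
  define \<theta> where "\<theta> = ln 3 / ln (2::real)"
  have l2: "ln (2::real) > 0" by simp
  have l23: "ln (2::real) < ln 3" by simp
  have th1: "\<theta> > 1" using l2 l23 by (simp add: \<theta>_def)
  obtain N :: nat where N: "N > 0" "inverse (real N) < \<delta> / ln 2"
    using ex_inverse_of_nat_less[of "\<delta> / ln 2"] assms l2 by auto
  obtain h k where hk: "0 < k" "\<bar>of_int k * \<theta> - of_int h\<bar> < 1/real N"
    using Dirichlet_approx[OF N(1), of \<theta>] by blast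
  have N1: "1/real N \<le> 1" using N(1) by simp
  have "real_of_int k \<ge> 1" using hk(1) by simp
  then have "of_int k * \<theta> \<ge> 1 * 1" using th1 by (intro mult_mono) auto
  then have h0: "h \<ge> 0" using hk(2) N1 by (auto simp: abs_less_iff)
  define a where "a = nat h"
  define b where "b = nat k"
  have ra: "real a = of_int h" using h0 by (simp add: a_def)
  have rb: "real b = of_int k" using hk(1) by (simp add: b_def)
  have eq: "real b * ln 3 - real a * ln 2 = ln 2 * (of_int k * \<theta> - of_int h)"
    using l2 by (simp add: ra rb \<theta>_def field_simps)
  have "\<bar>real b * ln 3 - real a * ln 2\<bar> = ln 2 * \<bar>of_int k * \<theta> - of_int h\<bar>"
    unfolding eq using l2 by (simp add: abs_mult)
  also have "\<dots> < ln 2 * (1/real N)" using hk(2) l2 by (intro mult_strict_left_mono) auto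
  also have "\<dots> < \<delta>" using N(2) l2 by (simp add: field_simps)
  finally have lt: "\<bar>real b * ln 3 - real a * ln 2\<bar> < \<delta>" .
  have "real b * ln 3 \<noteq> real a * ln 2"
  proof
    assume e: "real b * ln 3 = real a * ln 2"
    have "(3::real) ^ b = exp (real b * ln 3)" by (simp add: exp_of_nat_mult)
    also have "\<dots> = exp (real a * ln 2)" using e by simp
    also have "\<dots> = (2::real) ^ a" by (simp add: exp_of_nat_mult)
    finally have "(3::real) ^ b = 2 ^ a" .
    then have e2: "(3::nat) ^ b = 2 ^ a" by (metis (mono_tags) of_nat_eq_iff of_nat_numeral of_nat_power)
    have "b > 0" using hk(1) by (simp add: b_def)
    then have "odd ((3::nat) ^ b)" by simp
    then have "odd ((2::nat) ^ a)" using e2 by simp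
    then have "a = 0" by simp
    then have "(3::nat) ^ b = 1" using e2 by simp
    then show False using \<open>b > 0\<close> by simp
  qed
  then have "0 < \<bar>real b * ln 3 - real a * ln 2\<bar>" by simp
  then show ?thesis using lt by blast
qed

lemma cond2_H2:
  fixes a :: "real \<Rightarrow> real"
  assumes pos: "\<And>n. n \<ge> 1 \<Longrightarrow> a n > 0"
    and cond2: "\<exists>L. ((\<lambda>\<epsilon>. Liminf at_top (\<lambda>n::real. ereal
                    (INF st \<in> {(s, t). n \<le> s \<and> s \<le> t \<and> t \<le> (1 + \<epsilon>) * n}. a (snd st) / a (fst st))))
                  \<longlongrightarrow> L) (at_right 0) \<and> L \<ge> 1"
    and eta: "\<eta> > 0"
  shows "\<exists>\<delta>>0. \<exists>X. \<forall>s t. X \<le> s \<longrightarrow> s \<le> t \<longrightarrow> t \<le> s+\<delta> \<longrightarrow> ln (a (exp t)) - ln (a (exp s)) \<ge> -\<eta>"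
proof -
  define I where "I \<epsilon> n = (INF st \<in> {(s, t). n \<le> s \<and> s \<le> t \<and> t \<le> (1 + \<epsilon>) * n}. a (snd st) / a (fst st))" for \<epsilon> n :: real
  obtain L where L: "((\<lambda>\<epsilon>. Liminf at_top (\<lambda>n::real. ereal (I \<epsilon> n))) \<longlongrightarrow> L) (at_right 0)" "L \<ge> 1"
    using cond2 unfolding I_def by blast
  have e1: "exp (-\<eta>) < 1" using eta by simp
  have "ereal (exp (-\<eta>)) < ereal 1" using e1 by simp
  also have "ereal 1 \<le> L" using L(2) by (simp add: one_ereal_def)
  finally have "ereal (exp (-\<eta>)) < L" .
  then have "eventually (\<lambda>\<epsilon>. ereal (exp (-\<eta>)) < Liminf at_top (\<lambda>n::real. ereal (I \<epsilon> n))) (at_right 0)"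
    using L(1) by (rule order_tendstoD(1)[rotated])
  then obtain b where b: "b > 0" "\<And>\<epsilon>. \<epsilon> > 0 \<Longrightarrow> \<epsilon> < b \<Longrightarrow> ereal (exp (-\<eta>)) < Liminf at_top (\<lambda>n::real. ereal (I \<epsilon> n))"
    unfolding eventually_at_right_field by auto
  define \<epsilon> where "\<epsilon> = b/2"
  have ep: "\<epsilon> > 0" using b by (simp add: \<epsilon>_def)
  have "ereal (exp (-\<eta>)) < Liminf at_top (\<lambda>n::real. ereal (I \<epsilon> n))" using b ep by (auto simp: \<epsilon>_def)
  then have "eventually (\<lambda>n. ereal (exp (-\<eta>)) < ereal (I \<epsilon> n)) at_top"
    using le_Liminf_iff[of "Liminf at_top (\<lambda>n::real. ereal (I \<epsilon> n))" at_top "\<lambda>n. ereal (I \<epsilon> n)"] by blast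
  then obtain N where N: "\<And>n. n \<ge> N \<Longrightarrow> exp (-\<eta>) < I \<epsilon> n"
    unfolding eventually_at_top_linorder by auto
  define X where "X = ln (max N 1)"
  have "ln (a (exp t)) - ln (a (exp s)) \<ge> -\<eta>" if st: "X \<le> s" "s \<le> t" "t \<le> s + ln (1+\<epsilon>)" for s t
  proof -
    define n where "n = exp s"
    have "max N 1 = exp X" unfolding X_def by simp
    then have "max N 1 \<le> n" using st(1) unfolding n_def by simp
    then have n1: "n \<ge> 1" "n \<ge> N" by auto
    have t1: "exp t \<ge> n" using st by (simp add: n_def)
    have "exp t \<le> exp (s + ln (1+\<epsilon>))" using st by simp
    also have "\<dots> = (1+\<epsilon>) * n" using ep by (simp add: exp_add n_def)
    finally have t2: "exp t \<le> (1+\<epsilon>) * n" .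
    have mem: "(n, exp t) \<in> {(s, t). n \<le> s \<and> s \<le> t \<and> t \<le> (1 + \<epsilon>) * n}" using t1 t2 by simp
    have bdd: "bdd_below ((\<lambda>st. a (snd st) / a (fst st)) ` {(s, t). n \<le> s \<and> s \<le> t \<and> t \<le> (1 + \<epsilon>) * n})"
    proof (rule bdd_belowI2[of _ 0])
      fix st assume "st \<in> {(s, t). n \<le> s \<and> s \<le> t \<and> t \<le> (1 + \<epsilon>) * n}"
      then have "fst st \<ge> 1" "snd st \<ge> 1" using n1 by auto
      then show "0 \<le> a (snd st) / a (fst st)" using pos by (simp add: less_imp_le)
    qed
    have "I \<epsilon> n \<le> a (exp t) / a n"
      unfolding I_def using cINF_lower[OF bdd mem] by simp
    then have lt: "exp (-\<eta>) < a (exp t) / a n" using N[OF n1(2)] by linarith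
    have "1 \<le> exp t" using n1 t1 by linarith
    then have pa: "a n > 0" "a (exp t) > 0" using pos[of n] pos[of "exp t"] n1 by auto
    have "-\<eta> = ln (exp (-\<eta>))" by simp
    also have "\<dots> < ln (a (exp t) / a n)" using lt pa by (subst ln_less_cancel_iff) auto
    also have "\<dots> = ln (a (exp t)) - ln (a n)" using pa by (simp add: ln_div)
    finally show ?thesis by (simp add: n_def)
  qed
  moreover have "ln (1+\<epsilon>) > 0" using ep by simp
  ultimately show ?thesis by blast
qed




lemma exp_m1_bound:
  fixes r :: real
  assumes "\<bar>r\<bar> \<le> 1"
  shows "\<bar>exp r - 1\<bar> \<le> 2*\<bar>r\<bar>"
proof (cases "r \<ge> 0")
  case True
  have "exp r \<le> 1 + r + r\<^sup>2" using True assms by (intro exp_bound) auto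
  moreover have "r\<^sup>2 \<le> r"
  proof -
    have "r * r \<le> r * 1" using True assms by (intro mult_left_mono) auto
    then show ?thesis by (simp add: power2_eq_square)
  qed
  moreover have "1 \<le> exp r" using True by simp
  ultimately show ?thesis using True by simp
next
  case False
  have "1 + r \<le> exp r" by (rule exp_ge_add_one_self)
  moreover have "exp r \<le> 1" using False by simp
  moreover have "\<bar>exp r - 1\<bar> = 1 - exp r" using \<open>exp r \<le> 1\<close> by simp
  moreover have "\<bar>r\<bar> = - r" using False by simp
  ultimately show ?thesis by linarith
qed

lemma cond1_H:
  fixes a :: "real \<Rightarrow> real"
  assumes pos: "\<And>n. n \<ge> 1 \<Longrightarrow> a n > 0"
    and c1: "\<forall>m n. 1.1 < m \<and> m < 10 \<and> n \<ge> 1 \<longrightarrow>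
        (\<exists>e. a (m^2 * n) / a (m * n) = (a (m * n) / a n) * (1 + e) \<and> \<bar>e\<bar> \<le> K * n powr (-c))"
    and m: "1.1 < m" "m < 10"
    and x: "x \<ge> 0" "K * exp (-c*x) \<le> 1/2"
  shows "\<bar>ln (a (exp (x + 2*ln m))) - 2*ln (a (exp (x + ln m))) + ln (a (exp x))\<bar> \<le> (2*K) * exp (-c*x)"
proof -
  define n where "n = exp x"
  have n1: "n \<ge> 1" using x(1) by (simp add: n_def)
  have m1: "m > 1" using m(1) by simp
  have e1: "exp (x + ln m) = m * n" using m1 by (simp add: exp_add n_def)
  have "exp (x + 2*ln m) = exp ((x + ln m) + ln m)" by (simp add: algebra_simps)
  also have "\<dots> = m^2 * n" using m1 e1 by (simp only: exp_add) (simp add: power2_eq_square)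
  finally have e2: "exp (x + 2*ln m) = m^2 * n" .
  obtain e where e: "a (m^2*n)/a (m*n) = (a (m*n)/a n)*(1+e)" "\<bar>e\<bar> \<le> K * n powr (-c)"
    using c1 m n1 by blast
  have pw: "n powr (-c) = exp (-c*x)" by (simp add: n_def powr_def)
  have mn: "1 \<le> m*n"
  proof -
    have "1 * 1 \<le> m * n" using m1 n1 by (intro mult_mono) auto
    then show ?thesis by simp
  qed
  have mmn: "1 \<le> m^2*n"
  proof -
    have "1 * 1 \<le> m * (m*n)" using m1 mn by (intro mult_mono) auto
    then show ?thesis by (simp add: power2_eq_square mult.assoc)
  qed
  have A1: "a (m^2*n) > 0" using pos[OF mmn] .
  have A2: "a (m*n) > 0" using pos[OF mn] .
  have A3: "a n > 0" using pos[OF n1] .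
  have q1: "a (m^2*n)/a (m*n) > 0" using A1 A2 by simp
  have q2: "a (m*n)/a n > 0" using A2 A3 by simp
  have ope: "1 + e > 0"
  proof -
    have "(a (m*n)/a n)*(1+e) > 0" using q1 unfolding e(1) .
    then show ?thesis by (rule zero_less_mult_pos[OF _ q2])
  qed
  have "ln (a (m^2*n)/a (m*n)) = ln (a (m*n)/a n) + ln (1+e)"
    unfolding e(1) using q2 ope by (rule ln_mult_pos)
  then have lneq: "ln (a (m^2*n)) - 2*ln (a (m*n)) + ln (a n) = ln (1+e)"
    using A1 A2 A3 by (simp add: ln_div)
  have eb: "\<bar>e\<bar> \<le> K * exp (-c*x)" using e(2) pw by simp
  then have eh: "\<bar>e\<bar> \<le> 1/2" using x(2) by linarith
  have l1: "\<bar>ln (1 + e) - e\<bar> \<le> 2 * e\<^sup>2" using eh by (rule abs_ln_one_plus_x_minus_x_bound)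
  have "e\<^sup>2 = \<bar>e\<bar> * \<bar>e\<bar>" by (simp add: power2_eq_square abs_mult_self_eq)
  also have "\<dots> \<le> \<bar>e\<bar> * (1/2)" using eh by (intro mult_left_mono) auto
  finally have "2 * e\<^sup>2 \<le> \<bar>e\<bar>" by simp
  then have "\<bar>ln (1+e)\<bar> \<le> 2*\<bar>e\<bar>" using l1 by linarith
  then have "\<bar>ln (1+e)\<bar> \<le> (2*K) * exp (-c*x)" using eb by linarith
  then show ?thesis unfolding e1 e2 n_def[symmetric] lneq .
qed


theorem lemma2p6:
  fixes a :: "real \<Rightarrow> real"
  assumes pos: "\<And>n. n \<ge> 1 \<Longrightarrow> a n > 0"
    and cond1: "\<exists>c>0. \<exists>K. \<forall>m n. 1.1 < m \<and> m < 10 \<and> n \<ge> 1 \<longrightarrow>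
        (\<exists>e. a (m^2 * n) / a (m * n) = (a (m * n) / a n) * (1 + e) \<and> \<bar>e\<bar> \<le> K * n powr (-c))"
    and cond2: "\<exists>L. ((\<lambda>\<epsilon>. Liminf at_top (\<lambda>n::real. ereal
                    (INF st \<in> {(s, t). n \<le> s \<and> s \<le> t \<and> t \<le> (1 + \<epsilon>) * n}. a (snd st) / a (fst st))))
                  \<longlongrightarrow> L) (at_right 0) \<and> L \<ge> 1"
  shows "\<exists>C \<alpha> c'. 0 < C \<and> 0 < c' \<and> (\<exists>K N. \<forall>n \<ge> N.
           (\<exists>e. a n = C * n powr \<alpha> * (1 + e) \<and> \<bar>e\<bar> \<le> K * n powr (-c')))"
proof -
  obtain c K where cK: "c > 0" "\<forall>m n. 1.1 < m \<and> m < 10 \<and> n \<ge> 1 \<longrightarrow>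
        (\<exists>e. a (m^2 * n) / a (m * n) = (a (m * n) / a n) * (1 + e) \<and> \<bar>e\<bar> \<le> K * n powr (-c))"
    using cond1 by blast
  define f where "f x = ln (a (exp x))" for x
  have expbig: "B * exp (-c*x) \<le> 1/2" if "x \<ge> 2*\<bar>B\<bar>/c" for x B
  proof -
    have "c*x \<ge> 2*\<bar>B\<bar>" using that cK(1) by (simp add: field_simps)
    then have E: "exp (c*x) \<ge> 2*\<bar>B\<bar>" using exp_ge_add_one_self[of "c*x"] by linarith
    have "B * exp (-c*x) = B / exp (c*x)" by (simp add: exp_minus field_simps)
    also have "\<dots> \<le> \<bar>B\<bar> / exp (c*x)" by (intro divide_right_mono) auto
    also have "\<dots> \<le> 1/2" using E by (simp add: pos_divide_le_eq)
    finally show ?thesis .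
  qed
  define X0 where "X0 = max 0 (2*\<bar>K\<bar>/c)"
  have H: "\<bar>f (x+2*ln m) - 2*f (x+ln m) + f x\<bar> \<le> (2*K) * exp (-c*x)" if "x \<ge> X0" "1.1 < m" "m < 10" for x m
    unfolding f_def
  proof (rule cond1_H[OF pos cK(2)])
    show "0 \<le> x" using that by (simp add: X0_def)
    show "K * exp (-c*x) \<le> 1/2" using that expbig[of K x] by (simp add: X0_def)
  qed (use that in auto)
  have H2: "\<exists>\<delta>>0. \<exists>X. \<forall>s t. X \<le> s \<longrightarrow> s \<le> t \<longrightarrow> t \<le> s+\<delta> \<longrightarrow> f t - f s \<ge> -\<eta>" if "\<eta> > 0" for \<eta>
    unfolding f_def using cond2_H2[OF pos cond2 that] by blast
  obtain \<delta>1 X1 where d1: "\<delta>1 > 0" "\<forall>s t. X1 \<le> s \<longrightarrow> s \<le> t \<longrightarrow> t \<le> s+\<delta>1 \<longrightarrow> f t - f s \<ge> -1"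
    using H2[of 1] by auto
  have S1': "\<exists>L M X'. \<forall>x\<ge>X'. \<bar>f (x+ln m) - f x - L\<bar> \<le> M * exp (-c*x)" if m: "1.1 < m" "m < 10" for m
  proof (rule step1_lemma)
    show "0 < ln m" using m by simp
    show "\<And>x. X0 \<le> x \<Longrightarrow> \<bar>f (x + 2 * ln m) - 2 * f (x + ln m) + f x\<bar> \<le> (2*K) * exp (- c * x)"
      using H m by blast
    show "\<And>s t. X1 \<le> s \<Longrightarrow> s \<le> t \<Longrightarrow> t \<le> s + \<delta>1 \<Longrightarrow> - 1 \<le> f t - f s" using d1 by blast
  qed (use cK(1) d1(1) in auto)
  obtain L2 M2 Y2 where l2: "\<forall>x\<ge>Y2. \<bar>f (x+ln 2) - f x - L2\<bar> \<le> M2 * exp (-c*x)"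
    using S1'[of 2] by auto
  obtain L3 M3 Y3 where l3: "\<forall>x\<ge>Y3. \<bar>f (x+ln 3) - f x - L3\<bar> \<le> M3 * exp (-c*x)"
    using S1'[of 3] by auto
  define Y where "Y = max Y2 Y3"
  define KK where "KK = max M2 M3"
  have A1: "\<bar>f (x+ln 2) - f x - L2\<bar> \<le> KK * exp (-c*x)" if "x \<ge> Y" for x
  proof -
    have "M2 * exp (-c*x) \<le> KK * exp (-c*x)" by (intro mult_right_mono) (auto simp: KK_def)
    moreover have "x \<ge> Y2" using that by (simp add: Y_def)
    ultimately show ?thesis using l2[rule_format, of x] by linarith
  qed
  have A2: "\<bar>f (x+ln 3) - f x - L3\<bar> \<le> KK * exp (-c*x)" if "x \<ge> Y" for x
  proof -
    have "M3 * exp (-c*x) \<le> KK * exp (-c*x)" by (intro mult_right_mono) (auto simp: KK_def)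
    moreover have "x \<ge> Y3" using that by (simp add: Y_def)
    ultimately show ?thesis using l3[rule_format, of x] by linarith
  qed
  obtain \<alpha> B M X' where fin: "\<forall>x\<ge>X'. \<bar>f x - \<alpha>*x - B\<bar> \<le> M * exp (-c*x)"
  proof -
    have "\<exists>\<alpha> B M X'. \<forall>x\<ge>X'. \<bar>f x - \<alpha>*x - B\<bar> \<le> M * exp (-c*x)"
    proof (rule step3_lemma)
      show "0 < ln (2::real)" "0 < ln (3::real)" by simp_all
      show "\<And>x. Y \<le> x \<Longrightarrow> \<bar>f (x + ln 2) - f x - L2\<bar> \<le> KK * exp (- c * x)" by (rule A1)
      show "\<And>x. Y \<le> x \<Longrightarrow> \<bar>f (x + ln 3) - f x - L3\<bar> \<le> KK * exp (- c * x)" by (rule A2)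
      show "\<And>\<eta>. 0 < \<eta> \<Longrightarrow> \<exists>\<delta>>0. \<exists>X. \<forall>s t. X \<le> s \<longrightarrow> s \<le> t \<longrightarrow> t \<le> s + \<delta> \<longrightarrow> - \<eta> \<le> f t - f s"
        by (rule H2)
      show "\<And>\<delta>. 0 < \<delta> \<Longrightarrow> \<exists>a b. 0 < \<bar>real b * ln 3 - real a * ln 2\<bar> \<and> \<bar>real b * ln 3 - real a * ln 2\<bar> < \<delta>"
        by (rule dir_ln23)
    qed (use cK(1) in auto)
    then show ?thesis using that by blast
  qed
  define X4 where "X4 = max (max X' (2*\<bar>M\<bar>/c)) 0"
  define N where "N = exp X4"
  have main: "\<exists>e. a n = exp B * n powr \<alpha> * (1 + e) \<and> \<bar>e\<bar> \<le> (2*\<bar>M\<bar>) * n powr (-c)" if n: "n \<ge> N" for n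
  proof -
    have npos: "n > 0" using n by (simp add: N_def) (metis exp_gt_zero less_le_trans)
    define x where "x = ln n"
    have xn: "exp x = n" using npos by (simp add: x_def)
    have "X4 \<le> x" using n npos unfolding x_def N_def by (metis exp_le_cancel_iff exp_ln)
    then have x1: "X' \<le> x" "2*\<bar>M\<bar>/c \<le> x" "0 \<le> x" by (auto simp: X4_def)
    define r where "r = f x - \<alpha>*x - B"
    have rb: "\<bar>r\<bar> \<le> M * exp (-c*x)" using fin x1 by (simp add: r_def)
    also have "\<dots> \<le> \<bar>M\<bar> * exp (-c*x)" by (intro mult_right_mono) auto
    finally have rb2: "\<bar>r\<bar> \<le> \<bar>M\<bar> * exp (-c*x)" .
    have "\<bar>M\<bar> * exp (-c*x) \<le> 1/2" using expbig[of "\<bar>M\<bar>" x] x1 by simp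
    then have r1: "\<bar>r\<bar> \<le> 1" using rb2 by linarith
    have an: "a n > 0" using pos[of n] x1 xn by (metis one_le_exp_iff)
    have fx: "f x = ln (a n)" by (simp add: f_def xn)
    have "a n = exp (f x)" using an fx by simp
    also have "f x = B + \<alpha>*x + r" by (simp add: r_def)
    also have "exp (B + \<alpha>*x + r) = exp B * exp (\<alpha>*x) * exp r" by (simp add: exp_add)
    also have "exp (\<alpha>*x) = n powr \<alpha>" using npos by (simp add: powr_def x_def mult.commute)
    finally have "a n = exp B * n powr \<alpha> * (1 + (exp r - 1))" by simp
    moreover have "\<bar>exp r - 1\<bar> \<le> (2*\<bar>M\<bar>) * n powr (-c)"
    proof -
      have "\<bar>exp r - 1\<bar> \<le> 2*\<bar>r\<bar>" using r1 by (rule exp_m1_bound)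
      also have "\<dots> \<le> 2*(\<bar>M\<bar> * exp (-c*x))" using rb2 by simp
      also have "exp (-c*x) = n powr (-c)" using npos by (simp add: powr_def x_def)
      finally show ?thesis by simp
    qed
    ultimately show ?thesis by blast
  qed
  have allm: "\<forall>n\<ge>N. \<exists>e. a n = exp B * n powr \<alpha> * (1 + e) \<and> \<bar>e\<bar> \<le> (2*\<bar>M\<bar>) * n powr (-c)"
    using main by blast
  show ?thesis
  proof (intro exI conjI)
    show "0 < exp B" by simp
    show "0 < c" by (rule cK(1))
    show "\<forall>n\<ge>N. \<exists>e. a n = exp B * n powr \<alpha> * (1 + e) \<and> \<bar>e\<bar> \<le> (2*\<bar>M\<bar>) * n powr (-c)"
      by (rule allm)
  qed
qed


end
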